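(* For every integer $n\ge 14$, $\operatorname{str}(Q_n)\le 2^n+2^{n-3}+28$.
   Context: $Q_n$ is the $n$-dimensional hypercube: vertices are the binary strings of length $n$, two adjacent iff they differ in exactly one position. For a bijection $f:V(G)\to\{1,\dots,|V(G)|\}$, $\operatorname{str}_f(G)=\max\{f(u)+f(v):uv\in E(G)\}$, and the strength $\operatorname{str}(G)$ is the minimum of $\operatorname{str}_f(G)$ over all such bijections $f$. *)

theory Defs
  imports Main
begin

definition hypercube_vertices :: "nat \<Rightarrow> bool list set" where
  "hypercube_vertices n = {xs. length xs = n}"

definition hypercube_adj :: "nat \<Rightarrow> bool list \<Rightarrow> bool list \<Rightarrow> bool" where
  "hypercube_adj n u v \<longleftrightarrow> u \<in> hypercube_vertices n \<and> v \<in> hypercube_vertices n \<and>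
     card {i. i < n \<and> u ! i \<noteq> v ! i} = 1"

definition str_f :: "'a set \<Rightarrow> ('a \<Rightarrow> 'a \<Rightarrow> bool) \<Rightarrow> ('a \<Rightarrow> nat) \<Rightarrow> nat" where
  "str_f V E f = Max {f u + f v | u v. u \<in> V \<and> v \<in> V \<and> E u v}"

definition graph_strength :: "'a set \<Rightarrow> ('a \<Rightarrow> 'a \<Rightarrow> bool) \<Rightarrow> nat" where
  "graph_strength V E = Min {str_f V E f | f. bij_betw f V {1..card V}}"

end

theory Submission
  imports Defs "HOL.Binomial_Plus"
begin

definition hwt :: "bool list \<Rightarrow> nat" where "hwt xs = length (filter id xs)"

lemma hwt_Nil[simp]: "hwt [] = 0" by (simp add: hwt_def)
lemma hwt_Cons[simp]: "hwt (b # xs) = hwt xs + (if b then 1 else 0)" by (simp add: hwt_def)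
lemma hwt_le: "hwt xs \<le> length xs" by (simp add: hwt_def)

definition hS :: "nat \<Rightarrow> nat \<Rightarrow> nat" where "hS k w = (\<Sum>j<w. k choose j)"

definition hB :: "nat \<Rightarrow> nat" where "hB k = (\<Sum>j<k. j choose (j div 2))"

fun hp :: "bool list \<Rightarrow> nat" where
  "hp [] = 0"
| "hp (b # x) = hp x + hS (length x) (hwt x + (if b then 1 else 0))"

fun ham :: "bool list \<Rightarrow> bool list \<Rightarrow> nat" where
  "ham (a # u) (b # v) = (if a = b then 0 else 1) + ham u v"
| "ham _ _ = 0"

lemma hS_0[simp]: "hS k 0 = 0" by (simp add: hS_def)
lemma hS_Suc: "hS k (Suc w) = hS k w + (k choose w)" by (simp add: hS_def)
lemma hS_mono: "w \<le> w' \<Longrightarrow> hS k w \<le> hS k w'"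
  unfolding hS_def by (rule sum_mono2) auto
lemma hS_SucSuc: "hS (Suc k) (Suc w) = hS k (Suc w) + hS k w"
proof (induction w)
  case 0 then show ?case by (simp add: hS_def)
next
  case (Suc w)
  have "hS (Suc k) (Suc (Suc w)) = hS (Suc k) (Suc w) + (Suc k choose Suc w)" by (simp add: hS_Suc)
  also have "\<dots> = hS k (Suc w) + hS k w + (k choose w) + (k choose Suc w)" using Suc by simp
  also have "\<dots> = hS k (Suc (Suc w)) + hS k (Suc w)" by (simp add: hS_Suc)
  finally show ?case .
qed
lemma hS_full: "hS k (Suc k) = 2 ^ k"
proof -
  have "hS k (Suc k) = (\<Sum>j\<le>k. k choose j)" unfolding hS_def using lessThan_Suc_atMost by simp
  then show ?thesis using choose_row_sum by simp
qed

lemma hp_range: "hS (length x) (hwt x) \<le> hp x \<and> hp x < hS (length x) (Suc (hwt x))"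
proof (induction x)
  case Nil then show ?case by (simp add: hS_def)
next
  case (Cons a x)
  define k where "k = length x"
  define w where "w = hwt x"
  have IH: "hS k w \<le> hp x" "hp x < hS k (Suc w)" using Cons unfolding k_def w_def by auto
  show ?case
  proof (cases a)
    case True
    have "hS (Suc k) (Suc w) = hS k (Suc w) + hS k w" by (rule hS_SucSuc)
    moreover have "hS (Suc k) (Suc (Suc w)) = hS k (Suc (Suc w)) + hS k (Suc w)" by (rule hS_SucSuc)
    moreover have "hS k (Suc w) \<le> hS k (Suc (Suc w))" by (rule hS_mono) simp
    ultimately show ?thesis using True IH by (simp add: k_def[symmetric] w_def[symmetric])
  next
    case False
    show ?thesis
    proof (cases w)
      case 0
      have "hp x = 0" using IH 0 by (simp add: hS_def)
      then show ?thesis using False 0 by (simp add: k_def[symmetric] w_def[symmetric] hS_def)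
    next
      case (Suc u)
      have "hS (Suc k) (Suc u) = hS k (Suc u) + hS k u" by (rule hS_SucSuc)
      moreover have "hS (Suc k) (Suc (Suc u)) = hS k (Suc (Suc u)) + hS k (Suc u)" by (rule hS_SucSuc)
      moreover have "hS k u \<le> hS k (Suc u)" by (rule hS_mono) simp
      ultimately show ?thesis using False IH Suc by (simp add: k_def[symmetric] w_def[symmetric])
    qed
  qed
qed

lemma hp_lt: "hp x < 2 ^ length x"
proof -
  have "hp x < hS (length x) (Suc (hwt x))" using hp_range by blast
  also have "\<dots> \<le> hS (length x) (Suc (length x))" by (rule hS_mono) (simp add: hwt_le)
  finally show ?thesis by (simp add: hS_full)
qed

lemma hp_level_less: "hwt x < hwt y \<Longrightarrow> length x = length y \<Longrightarrow> hp x < hp y"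
proof -
  assume a: "hwt x < hwt y" "length x = length y"
  have "hp x < hS (length x) (Suc (hwt x))" using hp_range by blast
  also have "\<dots> \<le> hS (length y) (hwt y)" using a hS_mono[of "Suc (hwt x)" "hwt y" "length y"] by simp
  also have "\<dots> \<le> hp y" using hp_range by blast
  finally show ?thesis .
qed

lemma hp_inj: "length x = length y \<Longrightarrow> hp x = hp y \<Longrightarrow> x = y"
proof (induction x arbitrary: y)
  case Nil then show ?case by simp
next
  case (Cons a x)
  then obtain c y' where y: "y = c # y'" by (cases y) auto
  have len: "length x = length y'" using Cons y by simp
  have n1: "\<not> hwt (a # x) < hwt (c # y')" using hp_level_less[of "a # x" "c # y'"] Cons y by auto
  have n2: "\<not> hwt (c # y') < hwt (a # x)" using hp_level_less[of "c # y'" "a # x"] Cons y by auto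
  have wt: "hwt (a # x) = hwt (c # y')" using n1 n2 by linarith
  then have "hp x = hp y'" using Cons y len by simp
  then have "x = y'" using Cons len by blast
  moreover have "a = c" using wt \<open>x = y'\<close> by (simp split: if_splits)
  ultimately show ?case using y by simp
qed

lemma ham_0: "length x = length y \<Longrightarrow> ham x y = 0 \<Longrightarrow> x = y"
proof (induction x arbitrary: y)
  case Nil then show ?case by simp
next
  case (Cons a x)
  then obtain c y' where "y = c # y'" by (cases y) auto
  with Cons show ?case by (simp split: if_splits)
qed

lemma ham_wt: "length x = length y \<Longrightarrow> ham x y = 1 \<Longrightarrow> hwt y = Suc (hwt x) \<or> hwt x = Suc (hwt y)"
proof (induction x arbitrary: y)
  case Nil then show ?case by simp
next
  case (Cons a x)
  then obtain c y' where y: "y = c # y'" by (cases y) auto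
  show ?case
  proof (cases "a = c")
    case True
    then show ?thesis using Cons y by auto
  next
    case False
    then have "ham x y' = 0" using Cons y by simp
    then have "x = y'" using ham_0 Cons y by simp
    then show ?thesis using y False by auto
  qed
qed

lemma ham_refl[simp]: "ham x x = 0"
  by (induction x) auto

lemma ham_sym: "ham x y = ham y x"
  by (induction x y rule: ham.induct) auto

lemma hB_Suc: "hB (Suc k) = hB k + (k choose (k div 2))" by (simp add: hB_def)

lemma hp_step: "length x = length y \<Longrightarrow> ham x y = 1 \<Longrightarrow> hwt y = Suc (hwt x) \<Longrightarrow> hp y \<le> hp x + hB (length x)"
proof (induction x arbitrary: y)
  case Nil then show ?case by simp
next
  case (Cons a x)
  then obtain c y' where y: "y = c # y'" by (cases y) auto
  define k where "k = length x"
  have len: "length y' = k" using Cons y k_def by simp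
  have bm: "\<And>w. k choose w \<le> k choose (k div 2)" by (rule binomial_maximum)
  show ?case
  proof (cases "a = c")
    case True
    have h1: "ham x y' = 1" using Cons y True by simp
    have w1: "hwt y' = Suc (hwt x)" using Cons y True by (simp split: if_splits)
    have IH: "hp y' \<le> hp x + hB k" using Cons.IH[OF _ h1 w1] len k_def by simp
    have "hp y = hp y' + hS k (Suc (hwt x + (if a then 1 else 0)))"
      using y True w1 len by simp
    also have "\<dots> = hp y' + hS k (hwt x + (if a then 1 else 0)) + (k choose (hwt x + (if a then 1 else 0)))"
      by (simp add: hS_Suc)
    also have "\<dots> \<le> hp x + hB k + hS k (hwt x + (if a then 1 else 0)) + (k choose (k div 2))"
      using IH bm by (intro add_mono) auto
    also have "\<dots> = hp (a # x) + hB (length (a # x))" by (simp add: hB_Suc k_def)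
    finally show ?thesis .
  next
    case False
    then have "ham x y' = 0" using Cons y by simp
    then have xy: "x = y'" using ham_0 Cons y by simp
    then have ac: "a = False" "c = True" using Cons y False by (auto split: if_splits)
    have "hp y = hp x + hS k (hwt x) + (k choose hwt x)" using y xy ac k_def by (simp add: hS_Suc)
    also have "\<dots> \<le> hp x + hS k (hwt x) + (hB k + (k choose (k div 2)))" using bm[of "hwt x"] by linarith
    also have "\<dots> = hp (a # x) + hB (length (a # x))" using ac by (simp add: hB_Suc k_def)
    finally show ?thesis .
  qed
qed

lemma hp_edge: "length x = length y \<Longrightarrow> ham x y = 1 \<Longrightarrow> hp x \<le> hp y + hB (length x)"
proof -
  assume a: "length x = length y" "ham x y = 1"
  have hs: "ham y x = 1" using a ham_sym by simp
  from ham_wt[OF a] show ?thesis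
  proof
    assume "hwt y = Suc (hwt x)"
    then have "hp x < hp y" using hp_level_less a by simp
    then show ?thesis by simp
  next
    assume "hwt x = Suc (hwt y)"
    then show ?thesis using hp_step[of y x] a hs by simp
  qed
qed

lemma ham_card: "length u = length v \<Longrightarrow> card {i. i < length u \<and> u ! i \<noteq> v ! i} = ham u v"
proof (induction u arbitrary: v)
  case Nil then show ?case by simp
next
  case (Cons a u)
  then obtain b v' where v: "v = b # v'" by (cases v) auto
  have eq: "{i. i < length (a # u) \<and> (a # u) ! i \<noteq> v ! i}
      = (if a \<noteq> b then {0} else {}) \<union> Suc ` {i. i < length u \<and> u ! i \<noteq> v' ! i}"
  proof (rule set_eqI)
    fix i show "i \<in> {i. i < length (a # u) \<and> (a # u) ! i \<noteq> v ! i} \<longleftrightarrow>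
      i \<in> (if a \<noteq> b then {0} else {}) \<union> Suc ` {i. i < length u \<and> u ! i \<noteq> v' ! i}"
      by (cases i) (auto simp: v image_iff)
  qed
  have fin: "finite (Suc ` {i. i < length u \<and> u ! i \<noteq> v' ! i})" by simp
  have "card (Suc ` {i. i < length u \<and> u ! i \<noteq> v' ! i}) = ham u v'"
    using Cons v by (simp add: card_image)
  then show ?case using eq fin v by (auto simp: card_insert_if)
qed

lemma hB_bound: "k \<ge> 12 \<Longrightarrow> hB k + 1 \<le> 2 ^ (k - 2) \<and> k choose (k div 2) \<le> 2 ^ (k - 2)"
proof (induction k rule: nat_induct_at_least)
  case base
  have cb: "\<And>n k. k \<le> n \<Longrightarrow> (n::nat) choose k = fact n div (fact k * fact (n - k))"
    by (rule binomial_fact')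
  have "hB 12 = 988" by (simp add: hB_def lessThan_nat_numeral cb fact_numeral)
  moreover have "(12::nat) choose 6 = 924" by (simp add: cb fact_numeral)
  ultimately show ?case by simp
next
  case (Suc k)
  have c: "Suc k choose (Suc k div 2) \<le> 2 * (k choose (k div 2))"
  proof (cases "Suc k div 2")
    case 0 then show ?thesis by simp
  next
    case (Suc m)
    then have "Suc k choose (Suc k div 2) = (k choose m) + (k choose Suc m)" by simp
    also have "\<dots> \<le> 2 * (k choose (k div 2))" using binomial_maximum[of k m] binomial_maximum[of k "Suc m"] by simp
    finally show ?thesis .
  qed
  have e0: "Suc k - 2 = Suc (k - 2)" using Suc(1) by simp
  have e: "(2::nat) ^ (Suc k - 2) = 2 * 2 ^ (k - 2)" unfolding e0 by simp
  show ?case using Suc c e by (simp add: hB_Suc)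
qed

theorem corollary2p10:
  fixes n :: nat
  assumes "n \<ge> 14"
  shows "graph_strength (hypercube_vertices n) (hypercube_adj n) \<le> 2 ^ n + 2 ^ (n - 3) + 28"
proof -
  define V where "V = hypercube_vertices n"
  define E where "E = hypercube_adj n"
  obtain k where nk: "n = Suc k" using assms by (cases n) auto
  define f where "f v = (if even (hwt v) then hp (tl v) + 1 else 2 ^ n - hp (tl v))" for v
  have finV: "finite V" and cardV: "card V = 2 ^ n"
    using finite_lists_length_eq[of "UNIV :: bool set" n] card_lists_length_eq[of "UNIV :: bool set" n]
    by (simp_all add: V_def hypercube_vertices_def)
  have Eiff: "E u v \<longleftrightarrow> length u = n \<and> length v = n \<and> ham u v = 1" for u v
    unfolding E_def hypercube_adj_def hypercube_vertices_def using ham_card[of u v] by auto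
  have tl_lt: "hp (tl v) < 2 ^ k" if "v \<in> V" for v
    using hp_lt[of "tl v"] that nk by (simp add: V_def hypercube_vertices_def)
  have pow: "(2::nat) ^ n = 2 ^ k + 2 ^ k" using nk by simp
  have frange: "f v \<in> {1..2 ^ n}" if "v \<in> V" for v
    using tl_lt[OF that] pow by (auto simp: f_def)
  have finj: "inj_on f V"
  proof
    fix u v assume uv: "u \<in> V" "v \<in> V" "f u = f v"
    obtain a x where u: "u = a # x" using uv nk by (cases u) (auto simp: V_def hypercube_vertices_def)
    obtain c y where v: "v = c # y" using uv nk by (cases v) (auto simp: V_def hypercube_vertices_def)
    have lx: "length x = k" "length y = k" using uv u v nk by (auto simp: V_def hypercube_vertices_def)
    have px: "hp x < 2 ^ k" "hp y < 2 ^ k" using tl_lt[OF uv(1)] tl_lt[OF uv(2)] u v by auto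
    have par: "even (hwt u) = even (hwt v)" and pe: "hp x = hp y"
      using uv(3) px pow unfolding f_def u v by (auto split: if_splits)
    have "x = y" using hp_inj lx pe by simp
    then show "u = v" using par u v by (auto split: if_splits)
  qed
  have bij: "bij_betw f V {1..card V}"
  proof -
    have sub: "f ` V \<subseteq> {1..card V}" using frange cardV by auto
    have "card (f ` V) = card {1..card V}" using card_image[OF finj] by simp
    then have "f ` V = {1..card V}" using sub by (intro card_subset_eq) auto
    then show ?thesis using finj by (simp add: bij_betw_def)
  qed
  have edge: "f u + f v \<le> 2 ^ n + 1 + hB k" if uv: "u \<in> V" "v \<in> V" "E u v" for u v
  proof -
    obtain a x where u: "u = a # x" using uv nk by (cases u) (auto simp: V_def hypercube_vertices_def)
    obtain c y where v: "v = c # y" using uv nk by (cases v) (auto simp: V_def hypercube_vertices_def)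
    have lx: "length x = k" "length y = k" using uv u v nk by (auto simp: V_def hypercube_vertices_def)
    have px: "hp x < 2 ^ k" "hp y < 2 ^ k" using tl_lt[OF uv(1)] tl_lt[OF uv(2)] u v by auto
    have h: "ham u v = 1" using uv Eiff by simp
    have close: "hp x \<le> hp y + hB k \<and> hp y \<le> hp x + hB k"
    proof (cases "a = c")
      case True
      then have "ham x y = 1" using h u v by simp
      moreover have "ham y x = 1" using \<open>ham x y = 1\<close> ham_sym by simp
      ultimately show ?thesis using hp_edge[of x y] hp_edge[of y x] lx by simp
    next
      case False
      then have "ham x y = 0" using h u v by simp
      then have "x = y" using ham_0 lx by simp
      then show ?thesis by simp
    qed
    have wts: "hwt v = Suc (hwt u) \<or> hwt u = Suc (hwt v)" using ham_wt[of u v] h u v lx by simp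
    then have "even (hwt u) \<noteq> even (hwt v)" by auto
    then show ?thesis using close px pow unfolding f_def u v by (auto split: if_splits)
  qed
  have ex_edge: "E (replicate n False) (True # replicate k False)"
    using Eiff nk by simp
  have strf: "str_f V E f \<le> 2 ^ n + 1 + hB k"
  proof -
    let ?A = "{f u + f v | u v. u \<in> V \<and> v \<in> V \<and> E u v}"
    have A_sub: "?A \<subseteq> {..2 ^ n + 1 + hB k}" using edge by auto
    have "replicate n False \<in> V" "True # replicate k False \<in> V"
      using nk by (auto simp: V_def hypercube_vertices_def)
    then have "?A \<noteq> {}" using ex_edge by blast
    moreover have "finite ?A" using A_sub finite_subset by blast
    ultimately show ?thesis unfolding str_f_def using A_sub by (subst Max_le_iff) auto
  qed
  have bnd: "str_f V E g \<le> 2 * card V" if g: "bij_betw g V {1..card V}" for g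
  proof -
    let ?A = "{g u + g v | u v. u \<in> V \<and> v \<in> V \<and> E u v}"
    have gb: "g u \<le> card V" if "u \<in> V" for u using g that bij_betwE by fastforce
    have A_sub: "?A \<subseteq> {..2 * card V}"
    proof (rule subsetI)
      fix s assume "s \<in> ?A"
      then obtain u v where "s = g u + g v" "u \<in> V" "v \<in> V" by blast
      then show "s \<in> {..2 * card V}" using gb[of u] gb[of v] by simp
    qed
    have "replicate n False \<in> V" "True # replicate k False \<in> V"
      using nk by (auto simp: V_def hypercube_vertices_def)
    then have "?A \<noteq> {}" using ex_edge by blast
    moreover have "finite ?A" using A_sub finite_subset by blast
    ultimately show ?thesis unfolding str_f_def using A_sub by (subst Max_le_iff) auto
  qed
  let ?M = "{str_f V E g | g. bij_betw g V {1..card V}}"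
  have M_sub: "?M \<subseteq> {..2 * card V}"
  proof (rule subsetI)
    fix s assume "s \<in> ?M"
    then obtain g where "s = str_f V E g" "bij_betw g V {1..card V}" by blast
    then show "s \<in> {..2 * card V}" using bnd by simp
  qed
  have finM: "finite ?M" using M_sub finite_subset by blast
  have "graph_strength V E \<le> str_f V E f"
    unfolding graph_strength_def using finM bij by (intro Min_le) auto
  also have "\<dots> \<le> 2 ^ n + 1 + hB k" by (rule strf)
  also have "\<dots> \<le> 2 ^ n + 2 ^ (n - 3) + 28"
  proof -
    have "k \<ge> 12" using assms nk by simp
    then have "hB k + 1 \<le> 2 ^ (k - 2)" using hB_bound by blast
    moreover have "n - 3 = k - 2" using nk by simp
    ultimately show ?thesis by simp
  qed
  finally show ?thesis unfolding V_def E_def .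
qed

end
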